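(* Let $m\ge2$, $n\ge0$, $0\le k\le n$, input $\rho=|\vec n_0\rangle\langle\vec n_0|$ with $N_0=N(\vec n_0)$. For $\vec\alpha\in\mathbb C^m$ and $g\in\mathrm{SU}(m)$, the heterodyne filter function $$f_{\lambda_k}(\vec\alpha,g):=\frac{1}{s_{\lambda_k}}\langle\vec\alpha|\,\tau^m(g)\,[P_{\lambda_k}(\rho)]\,\tau^m(g)^\dagger\,|\vec\alpha\rangle$$ is given by $$f_{\lambda_k}(\vec\alpha,g)=\frac{(-1)^{\varphi(N_0)}}{s_{\lambda_k}}\sum_{M\in\mathrm{GT}(\lambda_k)}C^{M}_{N_0,\bar N_0}\sum_{N'\in\mathrm{GT}(\tau_n^m)}(-1)^{\varphi(N')}C^{M}_{N',\bar N'}\,\big|\langle\vec\alpha|\tau_n^m(g)|\vec n'\rangle\big|^2,$$ where $|\vec n'\rangle=|N'\rangle$ and $s_{\lambda_k}$ is the heterodyne frame-operator eigenvalue.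
   Context: Fix integers $m\ge 2$, $n\ge0$. $\mathcal H_n^m$ is the span of Fock states $|\vec n\rangle=|n_1,\dots,n_m\rangle$, $\vec n\in\mathbb N^m$, $\sum_in_i=n$. $\tau^m$ denotes the unitary action of $\mathrm{SU}(m)$ by passive transformations on the full $m$-mode Fock space, whose restriction to $\mathcal H_n^m$ is the totally symmetric irrep $\tau_n^m$; $\bar\tau_n^m$ is its complex conjugate in the Fock basis; $\omega_n^m(g)(X)=\tau_n^m(g)X\tau_n^m(g)^\dagger\cong\tau_n^m\otimes\bar\tau_n^m$. $\lambda_k$ is the irrep with Young diagram $(2k,k,\dots,k,0)$ (first row $2k$ boxes, rows $2,\dots,m-1$ with $k$ boxes, empty last row), $d_{\lambda_k}$ its dimension; $\tau_n^m\otimes\bar\tau_n^m\cong\bigoplus_{k=0}^n\lambda_k$ multiplicity-free, and $P_{\lambda_k}$ is the orthogonal (Hilbert–Schmidt) projector onto the $\lambda_k$ component of $\mathcal B(\mathcal H_n^m)$. Gelfand–Tsetlin (GT) patterns: for an irrep $\lambda=(\lambda_1,\dots,\lambda_m)$, $\lambda_m=0$, a GT pattern $M=(M_{i,j})_{1\le i\le j\le m}$ has $M_{i,m}=\lambda_i$ and $M_{i,j+1}\ge M_{i,j}\ge M_{i+1,j+1}$; $\mathrm{GT}(\lambda)$ is the set of such patterns and $\{|M\rangle\}$ the orthonormal GT basis (Condon–Shortley convention). The Fock state $|\vec n\rangle$ is identified with the GT basis vector $|N\rangle$ of $\tau_n^m$ with $N_{1,j}=n_1+\dots+n_j$, $N_{i,j}=0$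 for $i\ge2$; write $N=N(\vec n)$. The dual pattern is $\bar M_{i,l}:=M_{1,m}-M_{l-i+1,l}$. With $s_M(k)=\sum_{j=1}^k\sum_{i=1}^jM_{i,j}$ and $M_{\max}$ the highest-weight pattern, $\varphi(M):=s_M(m-1)-s_{M_{\max}}(m-1)\in\mathbb Z$, so that $|N\rangle=(-1)^{\varphi(N)}|\bar N\rangle$ when the Fock vector is regarded as a basis vector of $\bar\tau_n^m$. Real Clebsch–Gordan coefficients: $C^M_{N_1,\bar N_2}:=\langle N_1,\bar N_2|M\rangle$ for $N_1,N_2\in\mathrm{GT}(\tau_n^m)$, $M\in\mathrm{GT}(\lambda_k)$, with $|N_1\rangle\otimes|\bar N_2\rangle=\sum_k\sum_{M\in\mathrm{GT}(\lambda_k)}C^M_{N_1,\bar N_2}|M\rangle$. Coherent states: for $\vec\alpha\in\mathbb C^m$, $|\vec\alpha\rangle=e^{-|\vec\alpha|^2/2}\sum_{\vec n\in\mathbb N^m}\frac{\vec\alpha^{\vec n}}{\sqrt{\vec n!}}|\vec n\rangle$. Heterodyne frame-operator eigenvalue: $s_{\lambda_k}:=d_{\lambda_k}^{-1}\int_{\mathbb C^m}d^2\vec\alpha\,\langle\vec\alpha|P_{\lambda_k}(|\vec\alpha\rangle\langle\vec\alpha|)|\vec\alpha\rangle$ (with $P_{\lambda_k}$ applied after compressing to $\mathcal H_n^m$), assumed nonzero. *)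

theory Defs
  imports "HOL-Analysis.Analysis" "HOL-Library.Function_Algebras"
begin

(* Fock states: occupation-number functions; modes are indexed 0..m-1 (paper: 1..m) *)
type_synonym fock = "nat \<Rightarrow> nat"
(* operators on H_n^m as matrices in the Fock basis (zero outside H_n^m) *)
type_synonym fop = "fock \<Rightarrow> fock \<Rightarrow> complex"
(* Gelfand-Tsetlin patterns M i j, 1 <= i <= j <= m, zero elsewhere *)
type_synonym gtp = "nat \<Rightarrow> nat \<Rightarrow> nat"

definition fock_states :: "nat \<Rightarrow> nat \<Rightarrow> fock set" where
  "fock_states m n = {v. (\<forall>i. m \<le> i \<longrightarrow> v i = 0) \<and> (\<Sum>i<m. v i) = n}"

definition is_op :: "nat \<Rightarrow> nat \<Rightarrow> fop \<Rightarrow> bool" where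
  "is_op m n X \<longleftrightarrow> (\<forall>p q. X p q \<noteq> 0 \<longrightarrow> p \<in> fock_states m n \<and> q \<in> fock_states m n)"

definition opmult :: "nat \<Rightarrow> nat \<Rightarrow> fop \<Rightarrow> fop \<Rightarrow> fop" where
  "opmult m n A B = (\<lambda>p q. if p \<in> fock_states m n \<and> q \<in> fock_states m n
      then (\<Sum>r\<in>fock_states m n. A p r * B r q) else 0)"

definition adjoint :: "fop \<Rightarrow> fop" where
  "adjoint X = (\<lambda>p q. cnj (X q p))"

definition hs_inner :: "nat \<Rightarrow> nat \<Rightarrow> fop \<Rightarrow> fop \<Rightarrow> complex" where
  "hs_inner m n X Y = (\<Sum>p\<in>fock_states m n. \<Sum>q\<in>fock_states m n. cnj (X p q) * Y p q)"

(* the operator a_i^dagger a_j restricted to H_n^m (generator of the gl(m) action) *)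
definition ladder :: "nat \<Rightarrow> nat \<Rightarrow> nat \<Rightarrow> nat \<Rightarrow> fop" where
  "ladder m n i j = (\<lambda>p q. if p \<in> fock_states m n \<and> q \<in> fock_states m n then
      (if i = j then (if p = q then of_nat (q i) else 0)
       else if 0 < q j \<and> p = (q(j := q j - 1))(i := q i + 1)
         then complex_of_real (sqrt (real (q j * (q i + 1)))) else 0)
      else 0)"

(* derivative of omega_n^m: X \<mapsto> [a_i^dagger a_j, X] *)
definition ad :: "nat \<Rightarrow> nat \<Rightarrow> nat \<Rightarrow> nat \<Rightarrow> fop \<Rightarrow> fop" where
  "ad m n i j X = (\<lambda>p q. opmult m n (ladder m n i j) X p q - opmult m n X (ladder m n i j) p q)"

(* highest-weight vectors of weight nu for gl(l) acting on the first l modes *)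
definition hw_vectors :: "nat \<Rightarrow> nat \<Rightarrow> nat \<Rightarrow> (nat \<Rightarrow> int) \<Rightarrow> fop set" where
  "hw_vectors m n l nu = {X. is_op m n X
      \<and> (\<forall>i<l. ad m n i i X = (\<lambda>p q. of_int (nu i) * X p q))
      \<and> (\<forall>i j. i < j \<and> j < l \<longrightarrow> ad m n i j X = (\<lambda>p q. 0))}"

inductive_set gen_module :: "nat \<Rightarrow> nat \<Rightarrow> nat \<Rightarrow> fop set \<Rightarrow> fop set"
  for m n l S where
  gen_base: "X \<in> S \<Longrightarrow> X \<in> gen_module m n l S"
| gen_zero: "(\<lambda>p q. 0) \<in> gen_module m n l S"
| gen_add: "X \<in> gen_module m n l S \<Longrightarrow> Y \<in> gen_module m n l S \<Longrightarrow>
     (\<lambda>p q. X p q + Y p q) \<in> gen_module m n l S"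
| gen_scale: "X \<in> gen_module m n l S \<Longrightarrow> (\<lambda>p q. c * X p q) \<in> gen_module m n l S"
| gen_ad: "X \<in> gen_module m n l S \<Longrightarrow> i < l \<Longrightarrow> j < l \<Longrightarrow>
     ad m n i j X \<in> gen_module m n l S"

(* gl(m)-weight of the irrep lambda_k = (2k,k,...,k,0) inside tau (x) conj tau,
   i.e. (2k,k,...,k,0) - (k,...,k) = (k,0,...,0,-k) *)
definition lam_weight :: "nat \<Rightarrow> nat \<Rightarrow> nat \<Rightarrow> int" where
  "lam_weight m k = (\<lambda>i. if i = 0 then int k else if i = m - 1 then - int k else 0)"

definition component :: "nat \<Rightarrow> nat \<Rightarrow> nat \<Rightarrow> fop set" where
  "component m n k = gen_module m n m (hw_vectors m n m (lam_weight m k))"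

definition hs_proj :: "nat \<Rightarrow> nat \<Rightarrow> fop set \<Rightarrow> fop \<Rightarrow> fop" where
  "hs_proj m n W X = (THE Y. Y \<in> W \<and> (\<forall>Z\<in>W. hs_inner m n Z (\<lambda>p q. X p q - Y p q) = 0))"

definition P_lam :: "nat \<Rightarrow> nat \<Rightarrow> nat \<Rightarrow> fop \<Rightarrow> fop" where
  "P_lam m n k X = hs_proj m n (component m n k) X"

definition d_lam :: "nat \<Rightarrow> nat \<Rightarrow> nat \<Rightarrow> nat" where
  "d_lam m n k = vector_space.dim (\<lambda>(c::complex) (X::fop). \<lambda>p q. c * X p q) (component m n k)"

definition gt_patterns :: "nat \<Rightarrow> (nat \<Rightarrow> nat) \<Rightarrow> gtp set" where
  "gt_patterns m lam = {M.
      (\<forall>i j. \<not> (1 \<le> i \<and> i \<le> j \<and> j \<le> m) \<longrightarrow> M i j = 0)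
    \<and> (\<forall>i. 1 \<le> i \<and> i \<le> m \<longrightarrow> M i m = lam i)
    \<and> (\<forall>i j. 1 \<le> i \<and> i \<le> j \<and> j < m \<longrightarrow> M i j \<le> M i (j + 1) \<and> M (i + 1) (j + 1) \<le> M i j)}"

definition lambda_k :: "nat \<Rightarrow> nat \<Rightarrow> nat \<Rightarrow> nat" where
  "lambda_k m k = (\<lambda>i. if i = 1 then 2 * k else if 1 < i \<and> i < m then k else 0)"

definition tau_diag :: "nat \<Rightarrow> nat \<Rightarrow> nat" where
  "tau_diag n = (\<lambda>i. if i = 1 then n else 0)"

definition gt_max :: "nat \<Rightarrow> (nat \<Rightarrow> nat) \<Rightarrow> gtp" where
  "gt_max m lam = (\<lambda>i j. if 1 \<le> i \<and> i \<le> j \<and> j \<le> m then lam i else 0)"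

definition gt_s :: "gtp \<Rightarrow> nat \<Rightarrow> int" where
  "gt_s M kk = (\<Sum>j = 1..kk. \<Sum>i = 1..j. int (M i j))"

definition gt_phi :: "nat \<Rightarrow> (nat \<Rightarrow> nat) \<Rightarrow> gtp \<Rightarrow> int" where
  "gt_phi m lam M = gt_s M (m - 1) - gt_s (gt_max m lam) (m - 1)"

definition sgn_pow :: "int \<Rightarrow> complex" where
  "sgn_pow z = (if even z then 1 else -1)"

definition gt_of_fock :: "nat \<Rightarrow> fock \<Rightarrow> gtp" where
  "gt_of_fock m v = (\<lambda>i j. if i = 1 \<and> 1 \<le> j \<and> j \<le> m then (\<Sum>t<j. v t) else 0)"

definition fock_of_gt :: "nat \<Rightarrow> gtp \<Rightarrow> fock" where
  "fock_of_gt m N = (\<lambda>t. if t < m then N 1 (t + 1) - N 1 t else 0)"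

(* C^M_{N1, bar N2} = <N1, bar N2 | M>, where |N1> (x) |bar N2> corresponds to
   (-1)^phi(N2) |n1><n2| in B(H_n^m) and e M is the basis vector |M> *)
definition CG :: "nat \<Rightarrow> nat \<Rightarrow> (gtp \<Rightarrow> fop) \<Rightarrow> gtp \<Rightarrow> gtp \<Rightarrow> gtp \<Rightarrow> complex" where
  "CG m n e M N1 N2 = sgn_pow (gt_phi m (tau_diag n) N2) * e M (fock_of_gt m N1) (fock_of_gt m N2)"

definition gt_basis :: "nat \<Rightarrow> nat \<Rightarrow> nat \<Rightarrow> (gtp \<Rightarrow> fop) \<Rightarrow> bool" where
  "gt_basis m n k e \<longleftrightarrow>
     (\<forall>M\<in>gt_patterns m (lambda_k m k). e M \<in> component m n k
        \<and> (\<forall>l. 1 \<le> l \<and> l < m \<longrightarrow>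
             e M \<in> gen_module m n l (hw_vectors m n l (\<lambda>i. int (M (i + 1) l) - int k))))
   \<and> (\<forall>M\<in>gt_patterns m (lambda_k m k). \<forall>M'\<in>gt_patterns m (lambda_k m k).
        hs_inner m n (e M) (e M') = (if M = M' then 1 else 0))
   \<and> (\<forall>X\<in>component m n k.
        X = (\<lambda>p q. \<Sum>M\<in>gt_patterns m (lambda_k m k). hs_inner m n (e M) X * e M p q))
   \<and> (\<forall>M\<in>gt_patterns m (lambda_k m k). \<forall>N1\<in>gt_patterns m (tau_diag n).
        \<forall>N2\<in>gt_patterns m (tau_diag n). CG m n e M N1 N2 \<in> \<real>)"

(* SU(m) as m x m complex matrices (indices 0..m-1) *)
definition mat_det :: "nat \<Rightarrow> (nat \<Rightarrow> nat \<Rightarrow> complex) \<Rightarrow> complex" where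
  "mat_det m g = (\<Sum>p | p permutes {..<m}. of_int (sign p) * (\<Prod>i<m. g i (p i)))"

definition SU :: "nat \<Rightarrow> (nat \<Rightarrow> nat \<Rightarrow> complex) set" where
  "SU m = {g. (\<forall>i<m. \<forall>j<m. (\<Sum>t<m. cnj (g t i) * g t j) = (if i = j then 1 else 0))
              \<and> mat_det m g = 1}"

definition fock_fact :: "nat \<Rightarrow> fock \<Rightarrow> real" where
  "fock_fact m v = (\<Prod>i<m. fact (v i))"

(* mode of the s-th particle of the Fock state q (particles listed mode by mode) *)
definition slot_mode :: "fock \<Rightarrow> nat \<Rightarrow> nat" where
  "slot_mode q s = (LEAST i. s < (\<Sum>t\<le>i. q t))"

(* tau_n^m(g): passive transformation a_i^dagger \<mapsto> \<Sum>_j g_{ji} a_j^dagger, matrix elements <p|tau(g)|q> *)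
definition tau_mat :: "nat \<Rightarrow> nat \<Rightarrow> (nat \<Rightarrow> nat \<Rightarrow> complex) \<Rightarrow> fop" where
  "tau_mat m n g = (\<lambda>p q. if p \<in> fock_states m n \<and> q \<in> fock_states m n then
      (\<Sum>f\<in>{f\<in>{..<n} \<rightarrow>\<^sub>E {..<m}. \<forall>i<m. card {s\<in>{..<n}. f s = i} = p i}.
          \<Prod>s<n. g (f s) (slot_mode q s))
      * complex_of_real (sqrt (fock_fact m p) / sqrt (fock_fact m q))
    else 0)"

(* Fock coefficients <p|alpha> of the coherent state |alpha> *)
definition coh :: "nat \<Rightarrow> (nat \<Rightarrow> complex) \<Rightarrow> fock \<Rightarrow> complex" where
  "coh m \<alpha> p = complex_of_real (exp (- (\<Sum>i<m. (cmod (\<alpha> i))\<^sup>2) / 2))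
      * (\<Prod>i<m. \<alpha> i ^ p i) / complex_of_real (sqrt (fock_fact m p))"

(* <alpha| X |alpha> for X in B(H_n^m) (regarded as an operator on the full Fock space,
   zero outside H_n^m) *)
definition coh_expval :: "nat \<Rightarrow> nat \<Rightarrow> (nat \<Rightarrow> complex) \<Rightarrow> fop \<Rightarrow> complex" where
  "coh_expval m n \<alpha> X = (\<Sum>p\<in>fock_states m n. \<Sum>q\<in>fock_states m n. cnj (coh m \<alpha> p) * X p q * coh m \<alpha> q)"

(* |alpha><alpha| compressed to H_n^m *)
definition coh_proj :: "nat \<Rightarrow> nat \<Rightarrow> (nat \<Rightarrow> complex) \<Rightarrow> fop" where
  "coh_proj m n \<alpha> = (\<lambda>p q. if p \<in> fock_states m n \<and> q \<in> fock_states m n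
      then coh m \<alpha> p * cnj (coh m \<alpha> q) else 0)"

(* heterodyne frame-operator eigenvalue s_{lambda_k}; d^2 alpha = Lebesgue measure on C^m *)
definition s_lam :: "nat \<Rightarrow> nat \<Rightarrow> nat \<Rightarrow> complex" where
  "s_lam m n k = (1 / of_nat (d_lam m n k)) *
     (LINT \<alpha> | PiM {..<m} (\<lambda>_. (lborel :: complex measure)).
        coh_expval m n \<alpha> (P_lam m n k (coh_proj m n \<alpha>)))"

definition fock_proj :: "fock \<Rightarrow> fop" where
  "fock_proj v = (\<lambda>p q. if p = v \<and> q = v then 1 else 0)"

definition filter_fn :: "nat \<Rightarrow> nat \<Rightarrow> nat \<Rightarrow> fock \<Rightarrow> (nat \<Rightarrow> complex) \<Rightarrow> (nat \<Rightarrow> nat \<Rightarrow> complex) \<Rightarrow> complex" where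
  "filter_fn m n k n0 \<alpha> g = (1 / s_lam m n k) *
     coh_expval m n \<alpha> (opmult m n (opmult m n (tau_mat m n g) (P_lam m n k (fock_proj n0)))
                                    (adjoint (tau_mat m n g)))"

definition coh_tau_amp :: "nat \<Rightarrow> nat \<Rightarrow> (nat \<Rightarrow> complex) \<Rightarrow> (nat \<Rightarrow> nat \<Rightarrow> complex) \<Rightarrow> fock \<Rightarrow> complex" where
  "coh_tau_amp m n \<alpha> g v = (\<Sum>p\<in>fock_states m n. cnj (coh m \<alpha> p) * tau_mat m n g p v)"

end

theory Submission
  imports Defs
begin


lemma finite_fock_states: "finite (fock_states m n)"
proof -
  have "fock_states m n \<subseteq> {f. \<forall>x. (x \<in> {..<m} \<longrightarrow> f x \<in> {..n}) \<and> (x \<notin> {..<m} \<longrightarrow> f x = 0)}"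
  proof
    fix v assume v: "v \<in> fock_states m n"
    then have s: "(\<Sum>i<m. v i) = n" and z: "\<forall>i. m \<le> i \<longrightarrow> v i = 0" by (auto simp: fock_states_def)
    have "v x \<le> n" if "x < m" for x using member_le_sum[of x "{..<m}" v] that s by auto
    then show "v \<in> {f. \<forall>x. (x \<in> {..<m} \<longrightarrow> f x \<in> {..n}) \<and> (x \<notin> {..<m} \<longrightarrow> f x = 0)}" using z by auto
  qed
  moreover have "finite {f. \<forall>x. (x \<in> {..<m} \<longrightarrow> f x \<in> {..n}) \<and> (x \<notin> {..<m} \<longrightarrow> f x = (0::nat))}"
    by (rule finite_set_of_finite_funs) auto
  ultimately show ?thesis by (rule finite_subset)
qed

lemma ad_diag:
  assumes "p \<in> fock_states m n" "q \<in> fock_states m n"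
  shows "ad m n i i X p q = (of_nat (p i) - of_nat (q i)) * X p q"
proof -
  have 1: "opmult m n (ladder m n i i) X p q = of_nat (p i) * X p q"
  proof -
    have "opmult m n (ladder m n i i) X p q = (\<Sum>r\<in>fock_states m n. if p = r then of_nat (p i) * X p q else 0)"
      unfolding opmult_def using assms by (auto intro!: sum.cong simp: ladder_def)
    then show ?thesis using assms finite_fock_states by simp
  qed
  have 2: "opmult m n X (ladder m n i i) p q = X p q * of_nat (q i)"
  proof -
    have "opmult m n X (ladder m n i i) p q = (\<Sum>r\<in>fock_states m n. if q = r then X p q * of_nat (q i) else 0)"
      unfolding opmult_def using assms by (auto intro!: sum.cong simp: ladder_def)
    then show ?thesis using assms finite_fock_states by simp
  qed
  show ?thesis unfolding ad_def 1 2 by (simp add: algebra_simps)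
qed

lemma ladder_sum:
  assumes "ladder m n i j p r \<noteq> 0" "i < l" "j < l"
  shows "(\<Sum>t<l. p t) = (\<Sum>t<l. r t)"
proof (cases "i = j")
  case True then show ?thesis using assms by (auto simp: ladder_def split: if_splits)
next
  case False
  then have r: "0 < r j" and p: "p = (r(j := r j - 1))(i := r i + 1)" using assms by (auto simp: ladder_def split: if_splits)
  have pt: "p t + (if t = j then 1 else 0) = r t + (if t = i then 1 else 0)" for t
    using r False unfolding p by auto
  have "(\<Sum>t<l. p t + (if t = j then 1 else 0)) = (\<Sum>t<l. r t + (if t = i then 1 else 0))"
    using pt by simp
  then have "(\<Sum>t<l. p t) + 1 = (\<Sum>t<l. r t) + 1"
    using assms by (simp add: sum.distrib)
  then show ?thesis by simp
qed

lemma gen_support: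
  assumes "X \<in> gen_module m n l S" "S \<subseteq> hw_vectors m n l \<nu>"
  shows "X p q \<noteq> 0 \<Longrightarrow> p \<in> fock_states m n \<and> q \<in> fock_states m n \<and>
          int (\<Sum>t<l. p t) - int (\<Sum>t<l. q t) = (\<Sum>i<l. \<nu> i)"
  using assms(1)
proof (induction arbitrary: p q rule: gen_module.induct)
  case (gen_base X)
  then have hw: "X \<in> hw_vectors m n l \<nu>" using assms(2) by auto
  then have F: "p \<in> fock_states m n" "q \<in> fock_states m n" using gen_base
    by (auto simp: hw_vectors_def is_op_def)
  have "int (p i) - int (q i) = \<nu> i" if "i < l" for i
  proof -
    have "ad m n i i X p q = of_int (\<nu> i) * X p q" using hw that by (auto simp: hw_vectors_def)
    then have "(of_nat (p i) - of_nat (q i)) * X p q = of_int (\<nu> i) * X p q"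
      using ad_diag[OF F] by simp
    then have "(of_nat (p i) - of_nat (q i) :: complex) = of_int (\<nu> i)" using gen_base by simp
    then have "(of_int (int (p i) - int (q i)) :: complex) = of_int (\<nu> i)" by simp
    then show ?thesis by (simp only: of_int_eq_iff)
  qed
  then have "(\<Sum>i<l. int (p i) - int (q i)) = (\<Sum>i<l. \<nu> i)" by simp
  then show ?case using F by (simp add: sum_subtractf)
next
  case gen_zero then show ?case by simp
next
  case (gen_add X Y) then show ?case by (cases "X p q = 0") auto
next
  case (gen_scale X c) then show ?case by (cases "X p q = 0") auto
next
  case (gen_ad X i j)
  have F: "p \<in> fock_states m n" "q \<in> fock_states m n"
    using gen_ad.prems by (auto simp: ad_def opmult_def split: if_splits)
  have "opmult m n (ladder m n i j) X p q \<noteq> 0 \<or> opmult m n X (ladder m n i j) p q \<noteq> 0"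
    using gen_ad.prems by (auto simp: ad_def)
  then show ?case
  proof
    assume "opmult m n (ladder m n i j) X p q \<noteq> 0"
    then have "(\<Sum>r\<in>fock_states m n. ladder m n i j p r * X r q) \<noteq> 0"
      using F unfolding opmult_def by simp
    then obtain r where "ladder m n i j p r * X r q \<noteq> 0"
      by (rule sum.not_neutral_contains_not_neutral)
    then have a: "ladder m n i j p r \<noteq> 0" "X r q \<noteq> 0" by auto
    from ladder_sum[OF a(1) gen_ad.hyps(2,3)] gen_ad.IH[OF a(2)] show ?case using F by simp
  next
    assume "opmult m n X (ladder m n i j) p q \<noteq> 0"
    then have "(\<Sum>r\<in>fock_states m n. X p r * ladder m n i j r q) \<noteq> 0"
      using F unfolding opmult_def by simp
    then obtain r where "X p r * ladder m n i j r q \<noteq> 0"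
      by (rule sum.not_neutral_contains_not_neutral)
    then have a: "ladder m n i j r q \<noteq> 0" "X p r \<noteq> 0" by auto
    from ladder_sum[OF a(1) gen_ad.hyps(2,3)] gen_ad.IH[OF a(2)] show ?case using F by simp
  qed
qed

lemma gen_sum:
  assumes "finite A" "\<And>a. a \<in> A \<Longrightarrow> E a \<in> gen_module m n l S"
  shows "(\<lambda>p q. \<Sum>a\<in>A. c a * E a p q) \<in> gen_module m n l S"
  using assms
proof (induction A rule: finite_induct)
  case empty then show ?case using gen_zero by simp
next
  case (insert x A)
  then show ?case using gen_add[OF gen_scale[of "E x" m n l S "c x"], of "\<lambda>p q. \<Sum>a\<in>A. c a * E a p q"]
    by simp
qed



lemma gt_bound_aux:
  assumes "M \<in> gt_patterns m lam"
  shows "\<forall>j. 1 \<le> i \<longrightarrow> i \<le> j \<longrightarrow> j \<le> m \<longrightarrow> m - j = d \<longrightarrow> M i j \<le> lam i"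
proof (induction d)
  case 0 then show ?case using assms by (auto simp: gt_patterns_def)
next
  case (Suc d)
  show ?case
  proof (intro allI impI)
    fix j assume h: "1 \<le> i" "i \<le> j" "j \<le> m" "m - j = Suc d"
    then have "M i j \<le> M i (j + 1)" using assms by (auto simp: gt_patterns_def)
    moreover have "M i (j+1) \<le> lam i" using Suc h by auto
    ultimately show "M i j \<le> lam i" by simp
  qed
qed

lemma gt_bound:
  assumes "M \<in> gt_patterns m lam" "1 \<le> i" "i \<le> j" "j \<le> m"
  shows "M i j \<le> lam i"
  using gt_bound_aux[OF assms(1), of i "m - j"] assms by auto

lemma finite_gt_patterns: "finite (gt_patterns m lam)"
proof -
  define B where "B = Max (lam ` {..m})"
  define G where "G = {f::nat\<Rightarrow>nat. \<forall>j. (j \<in> {..m} \<longrightarrow> f j \<in> {..B}) \<and> (j \<notin> {..m} \<longrightarrow> f j = 0)}"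
  have fG: "finite G" unfolding G_def by (rule finite_set_of_finite_funs) auto
  have "gt_patterns m lam \<subseteq> {M. \<forall>i. (i \<in> {..m} \<longrightarrow> M i \<in> G) \<and> (i \<notin> {..m} \<longrightarrow> M i = (\<lambda>_. 0))}"
  proof
    fix M assume M: "M \<in> gt_patterns m lam"
    have z: "M i j = 0" if "\<not> (1 \<le> i \<and> i \<le> j \<and> j \<le> m)" for i j
      using M that by (auto simp: gt_patterns_def)
    have b: "M i j \<le> B" for i j
    proof (cases "1 \<le> i \<and> i \<le> j \<and> j \<le> m")
      case True
      then have "M i j \<le> lam i" using gt_bound[OF M] by auto
      also have "lam i \<le> B" unfolding B_def using True by (intro Max_ge) auto
      finally show ?thesis .
    next
      case False then show ?thesis using z by simp
    qed
    show "M \<in> {M. \<forall>i. (i \<in> {..m} \<longrightarrow> M i \<in> G) \<and> (i \<notin> {..m} \<longrightarrow> M i = (\<lambda>_. 0))}"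
      using z b by (auto simp: G_def)
  qed
  moreover have "finite {M. \<forall>i. (i \<in> {..m} \<longrightarrow> M i \<in> G) \<and> (i \<notin> {..m} \<longrightarrow> M i = (\<lambda>_. 0::nat))}"
    by (rule finite_set_of_finite_funs) (use fG in auto)
  ultimately show ?thesis by (rule finite_subset)
qed

lemma tau_pat_zero:
  assumes "N \<in> gt_patterns m (tau_diag n)" "2 \<le> i"
  shows "N i j = 0"
proof (cases "1 \<le> i \<and> i \<le> j \<and> j \<le> m")
  case True then show ?thesis using gt_bound[OF assms(1), of i j] assms by (simp add: tau_diag_def)
next
  case False then show ?thesis using assms by (auto simp: gt_patterns_def)
qed

lemma tau_pat_sum:
  assumes "N \<in> gt_patterns m (tau_diag n)"
  shows "j \<le> m \<Longrightarrow> (\<Sum>t<j. fock_of_gt m N t) = N 1 j"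
proof (induction j)
  case 0 then show ?case using assms by (auto simp: gt_patterns_def)
next
  case (Suc j)
  have le: "N 1 j \<le> N 1 (Suc j)"
  proof (cases "j = 0")
    case True then show ?thesis using assms by (auto simp: gt_patterns_def)
  next
    case False then show ?thesis using assms Suc.prems by (auto simp: gt_patterns_def)
  qed
  show ?case using Suc le by (simp add: fock_of_gt_def)
qed

lemma fock_of_gt_in:
  assumes "N \<in> gt_patterns m (tau_diag n)" "1 \<le> m"
  shows "fock_of_gt m N \<in> fock_states m n"
proof -
  have "(\<Sum>t<m. fock_of_gt m N t) = N 1 m" using tau_pat_sum[OF assms(1)] by simp
  also have "\<dots> = n" using assms by (auto simp: gt_patterns_def tau_diag_def)
  finally show ?thesis by (auto simp: fock_states_def fock_of_gt_def)
qed

lemma gt_fock_gt: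
  assumes "N \<in> gt_patterns m (tau_diag n)"
  shows "gt_of_fock m (fock_of_gt m N) = N"
proof (intro ext)
  fix i j
  show "gt_of_fock m (fock_of_gt m N) i j = N i j"
  proof (cases "i = 1 \<and> 1 \<le> j \<and> j \<le> m")
    case True then show ?thesis using tau_pat_sum[OF assms] by (simp add: gt_of_fock_def)
  next
    case False
    have "N i j = 0"
    proof (cases "2 \<le> i")
      case True then show ?thesis using tau_pat_zero[OF assms] by simp
    next
      case False2: False
      then show ?thesis using False assms by (auto simp: gt_patterns_def)
    qed
    moreover have "gt_of_fock m (fock_of_gt m N) i j = 0"
      unfolding gt_of_fock_def by (rule if_not_P[OF False])
    ultimately show ?thesis by simp
  qed
qed

lemma fock_gt_fock:
  assumes "v \<in> fock_states m n"
  shows "fock_of_gt m (gt_of_fock m v) = v"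
proof
  fix t show "fock_of_gt m (gt_of_fock m v) t = v t"
    using assms by (auto simp: fock_of_gt_def gt_of_fock_def fock_states_def)
qed

lemma gt_of_fock_in:
  assumes "v \<in> fock_states m n"
  shows "gt_of_fock m v \<in> gt_patterns m (tau_diag n)"
proof -
  have mono: "(\<Sum>t<j. v t) \<le> (\<Sum>t<Suc j. v t)" for j by simp
  show ?thesis using assms mono
    unfolding gt_patterns_def gt_of_fock_def tau_diag_def fock_states_def
    by auto
qed

lemma sum_gt_fock:
  assumes "1 \<le> m"
  shows "(\<Sum>N\<in>gt_patterns m (tau_diag n). h (fock_of_gt m N)) = (\<Sum>v\<in>fock_states m n. h v)"
  by (rule sum.reindex_bij_witness[where i = "gt_of_fock m" and j = "fock_of_gt m"])
     (use assms in \<open>auto simp: gt_fock_gt fock_gt_fock fock_of_gt_in gt_of_fock_in\<close>)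



lemma hs_inner_lin2:
  "hs_inner m n Z (\<lambda>p q. \<Sum>M\<in>G. c M * E M p q) = (\<Sum>M\<in>G. c M * hs_inner m n Z (E M))"
  unfolding hs_inner_def
  by (simp add: sum_distrib_left sum_distrib_right mult.left_commute sum.swap[of _ G])

lemma hs_inner_lin1:
  "hs_inner m n (\<lambda>p q. \<Sum>M\<in>G. c M * E M p q) Y = (\<Sum>M\<in>G. cnj (c M) * hs_inner m n (E M) Y)"
  unfolding hs_inner_def
  by (simp add: cnj_sum sum_distrib_left sum_distrib_right mult.assoc sum.swap[of _ G])

lemma hs_inner_diff:
  "hs_inner m n Z (\<lambda>p q. X p q - Y p q) = hs_inner m n Z X - hs_inner m n Z Y"
  unfolding hs_inner_def by (simp add: algebra_simps sum_subtractf)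

lemma hs_inner_self_zero:
  assumes "hs_inner m n D D = 0" "p \<in> fock_states m n" "q \<in> fock_states m n"
  shows "D p q = 0"
proof -
  let ?F = "fock_states m n"
  have cz: "cnj z * z = of_real ((cmod z)\<^sup>2)" for z :: complex
    by (metis complex_norm_square mult.commute)
  have "hs_inner m n D D = of_real (\<Sum>p\<in>?F. \<Sum>q\<in>?F. (cmod (D p q))\<^sup>2)"
    unfolding hs_inner_def cz of_real_sum ..
  then have "(of_real (\<Sum>p\<in>?F. \<Sum>q\<in>?F. (cmod (D p q))\<^sup>2) :: complex) = 0" using assms(1) by metis
  then have "(\<Sum>p\<in>?F. \<Sum>q\<in>?F. (cmod (D p q))\<^sup>2) = 0" by (simp only: of_real_eq_0_iff)
  then have "\<forall>p\<in>?F. (\<Sum>q\<in>?F. (cmod (D p q))\<^sup>2) = 0"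
    by (subst (asm) sum_nonneg_eq_0_iff) (auto intro: sum_nonneg simp: finite_fock_states)
  then have "(\<Sum>q\<in>?F. (cmod (D p q))\<^sup>2) = 0" using assms by auto
  then have "\<forall>q\<in>?F. (cmod (D p q))\<^sup>2 = 0"
    by (subst (asm) sum_nonneg_eq_0_iff) (auto simp: finite_fock_states)
  then show ?thesis using assms by auto
qed

lemma component_support:
  assumes "X \<in> component m n k" "X p q \<noteq> 0"
  shows "p \<in> fock_states m n \<and> q \<in> fock_states m n"
  using gen_support[of X m n m "hw_vectors m n m (lam_weight m k)" "lam_weight m k" p q] assms
  by (auto simp: component_def)

lemma gb_in: assumes "gt_basis m n k e" "M \<in> gt_patterns m (lambda_k m k)"
  shows "e M \<in> component m n k"
proof -
  have "\<forall>M\<in>gt_patterns m (lambda_k m k). e M \<in> component m n k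
        \<and> (\<forall>l. 1 \<le> l \<and> l < m \<longrightarrow>
             e M \<in> gen_module m n l (hw_vectors m n l (\<lambda>i. int (M (i + 1) l) - int k)))"
    using assms(1) unfolding gt_basis_def by (rule conjunct1)
  then show ?thesis using assms(2) by blast
qed

lemma gb_gen: assumes "gt_basis m n k e" "M \<in> gt_patterns m (lambda_k m k)" "1 \<le> l" "l < m"
  shows "e M \<in> gen_module m n l (hw_vectors m n l (\<lambda>i. int (M (i + 1) l) - int k))"
proof -
  have "\<forall>M\<in>gt_patterns m (lambda_k m k). e M \<in> component m n k
        \<and> (\<forall>l. 1 \<le> l \<and> l < m \<longrightarrow>
             e M \<in> gen_module m n l (hw_vectors m n l (\<lambda>i. int (M (i + 1) l) - int k)))"
    using assms(1) unfolding gt_basis_def by (rule conjunct1)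
  then show ?thesis using assms(2-) by blast
qed

lemma gb_orth: assumes "gt_basis m n k e" "M \<in> gt_patterns m (lambda_k m k)" "M' \<in> gt_patterns m (lambda_k m k)"
  shows "hs_inner m n (e M) (e M') = (if M = M' then 1 else 0)"
proof -
  have "\<forall>M\<in>gt_patterns m (lambda_k m k). \<forall>M'\<in>gt_patterns m (lambda_k m k).
        hs_inner m n (e M) (e M') = (if M = M' then 1 else 0)"
    using assms(1) unfolding gt_basis_def by (elim conjE)
  then show ?thesis using assms(2-) by blast
qed

lemma gb_exp: assumes "gt_basis m n k e" "X \<in> component m n k"
  shows "X = (\<lambda>p q. \<Sum>M\<in>gt_patterns m (lambda_k m k). hs_inner m n (e M) X * e M p q)"
proof -
  have "\<forall>X\<in>component m n k.
        X = (\<lambda>p q. \<Sum>M\<in>gt_patterns m (lambda_k m k). hs_inner m n (e M) X * e M p q)"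
    using assms(1) unfolding gt_basis_def by (elim conjE)
  then show ?thesis using assms(2-) by blast
qed

lemma gb_real: assumes "gt_basis m n k e" "M \<in> gt_patterns m (lambda_k m k)"
   "N1 \<in> gt_patterns m (tau_diag n)" "N2 \<in> gt_patterns m (tau_diag n)"
  shows "CG m n e M N1 N2 \<in> \<real>"
proof -
  have "\<forall>M\<in>gt_patterns m (lambda_k m k). \<forall>N1\<in>gt_patterns m (tau_diag n).
        \<forall>N2\<in>gt_patterns m (tau_diag n). CG m n e M N1 N2 \<in> \<real>"
    using assms(1) unfolding gt_basis_def by (elim conjE)
  then show ?thesis using assms(2-) by blast
qed

lemma proj_expand:
  assumes gb: "gt_basis m n k e"
  shows "P_lam m n k X = (\<lambda>p q. \<Sum>M\<in>gt_patterns m (lambda_k m k). hs_inner m n (e M) X * e M p q)"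
    (is "_ = ?Y0")
proof -
  let ?G = "gt_patterns m (lambda_k m k)"
  let ?W = "component m n k"
  have inW: "e M \<in> ?W" if "M \<in> ?G" for M using gb_in[OF gb that] .
  have orth: "hs_inner m n (e M) (e M') = (if M = M' then 1 else 0)" if "M \<in> ?G" "M' \<in> ?G" for M M'
    using gb_orth[OF gb that] .
  have exp: "Z = (\<lambda>p q. \<Sum>M\<in>?G. hs_inner m n (e M) Z * e M p q)" if "Z \<in> ?W" for Z
    using gb_exp[OF gb that] .
  have Y0W: "?Y0 \<in> ?W" unfolding component_def
    by (rule gen_sum) (use inW in \<open>auto simp: component_def finite_gt_patterns\<close>)
  have eY0: "hs_inner m n (e M) ?Y0 = hs_inner m n (e M) X" if "M \<in> ?G" for M
  proof -
    have "hs_inner m n (e M) ?Y0 = (\<Sum>M'\<in>?G. hs_inner m n (e M') X * hs_inner m n (e M) (e M'))"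
      by (rule hs_inner_lin2)
    also have "\<dots> = (\<Sum>M'\<in>?G. if M = M' then hs_inner m n (e M) X else 0)"
      by (rule sum.cong) (use that orth in auto)
    also have "\<dots> = hs_inner m n (e M) X" using that by (simp add: finite_gt_patterns)
    finally show ?thesis .
  qed
  have orthY0: "hs_inner m n Z (\<lambda>p q. X p q - ?Y0 p q) = 0" if "Z \<in> ?W" for Z
  proof -
    have "hs_inner m n Z (\<lambda>p q. X p q - ?Y0 p q)
        = hs_inner m n (\<lambda>p q. \<Sum>M\<in>?G. hs_inner m n (e M) Z * e M p q) (\<lambda>p q. X p q - ?Y0 p q)"
      using exp[OF that] by simp
    also have "\<dots> = (\<Sum>M\<in>?G. cnj (hs_inner m n (e M) Z) * hs_inner m n (e M) (\<lambda>p q. X p q - ?Y0 p q))"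
      by (rule hs_inner_lin1)
    also have "\<dots> = 0"
      by (rule sum.neutral) (auto simp: hs_inner_diff eY0)
    finally show ?thesis .
  qed
  show ?thesis unfolding P_lam_def hs_proj_def
  proof (rule the_equality)
    show "?Y0 \<in> ?W \<and> (\<forall>Z\<in>?W. hs_inner m n Z (\<lambda>p q. X p q - ?Y0 p q) = 0)"
      using Y0W orthY0 by auto
  next
    fix Y assume Y: "Y \<in> ?W \<and> (\<forall>Z\<in>?W. hs_inner m n Z (\<lambda>p q. X p q - Y p q) = 0)"
    define D where "D = (\<lambda>p q. ?Y0 p q - Y p q)"
    have "(\<lambda>p q. ?Y0 p q + (-1) * Y p q) \<in> ?W"
      unfolding component_def
      by (rule gen_add[OF _ gen_scale]) (use Y0W Y in \<open>auto simp: component_def\<close>)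
    then have DW: "D \<in> ?W" unfolding D_def by simp
    have "hs_inner m n D D = hs_inner m n D (\<lambda>p q. X p q - Y p q) - hs_inner m n D (\<lambda>p q. X p q - ?Y0 p q)"
      unfolding hs_inner_diff[symmetric] D_def by (simp add: algebra_simps)
    also have "\<dots> = 0" using Y DW orthY0 by auto
    finally have DD: "hs_inner m n D D = 0" .
    show "Y = ?Y0"
    proof (intro ext)
      fix p q
      show "Y p q = ?Y0 p q"
      proof (cases "p \<in> fock_states m n \<and> q \<in> fock_states m n")
        case True
        then show ?thesis using hs_inner_self_zero[OF DD] unfolding D_def by auto
      next
        case False
        then have "Y p q = 0" "?Y0 p q = 0"
          using component_support[of Y m n k p q] component_support[OF Y0W, of p q] Y by auto
        then show ?thesis by simp
      qed
    qed
  qed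
qed

lemma basis_diag:
  assumes gb: "gt_basis m n k e" and M: "M \<in> gt_patterns m (lambda_k m k)"
    and v: "e M v v \<noteq> 0" and pq: "e M p q \<noteq> 0"
  shows "p = q"
proof -
  have inW: "e M \<in> component m n k" using gb_in[OF gb M] .
  have F0: "p \<in> fock_states m n \<and> q \<in> fock_states m n" using component_support[of "e M" m n k p q] inW pq by blast
  then have F: "p \<in> fock_states m n" "q \<in> fock_states m n" by (rule conjunct1, rule conjunct2)
  have S: "(\<Sum>t<l. p t) = (\<Sum>t<l. q t)" if "l \<le> m" for l
  proof (cases "1 \<le> l \<and> l < m")
    case True
    let ?nu = "\<lambda>i. int (M (i + 1) l) - int k"
    have mem: "e M \<in> gen_module m n l (hw_vectors m n l ?nu)" using gb_gen[OF gb M] True by blast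
    have a: "int (\<Sum>t<l. p t) - int (\<Sum>t<l. q t) = (\<Sum>i<l. ?nu i)"
      using gen_support[of "e M" m n l _ ?nu p q] mem pq by blast
    have b: "int (\<Sum>t<l. v t) - int (\<Sum>t<l. v t) = (\<Sum>i<l. ?nu i)"
      using gen_support[of "e M" m n l _ ?nu v v] mem v by blast
    from a b have "int (\<Sum>t<l. p t) = int (\<Sum>t<l. q t)" by linarith
    then show ?thesis by (simp only: of_nat_eq_iff)
  next
    case False
    then have "l = 0 \<or> l = m" using that by auto
    then show ?thesis using F by (auto simp: fock_states_def)
  qed
  show "p = q"
  proof
    fix t show "p t = q t"
    proof (cases "t < m")
      case True
      have "p t = (\<Sum>i<Suc t. p i) - (\<Sum>i<t. p i)" by simp
      also have "\<dots> = (\<Sum>i<Suc t. q i) - (\<Sum>i<t. q i)" using S[of t] S[of "Suc t"] True by simp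
      also have "\<dots> = q t" by simp
      finally show ?thesis .
    next
      case False then show ?thesis using F by (auto simp: fock_states_def)
    qed
  qed
qed



lemma sandwich:
  fixes T Y :: fop and c :: "fock \<Rightarrow> complex"
  shows "(\<Sum>p\<in>fock_states m n. \<Sum>q\<in>fock_states m n. cnj (c p) * opmult m n (opmult m n T Y) (adjoint T) p q * c q)
       = (\<Sum>s\<in>fock_states m n. \<Sum>r\<in>fock_states m n.
            (\<Sum>p\<in>fock_states m n. cnj (c p) * T p s) * Y s r * cnj (\<Sum>p\<in>fock_states m n. cnj (c p) * T p r))"
proof -
  let ?F = "fock_states m n"
  define t where "t p q r s = cnj (c p) * T p s * Y s r * cnj (T q r) * c q" for p q r s
  have "(\<Sum>p\<in>?F. \<Sum>q\<in>?F. cnj (c p) * opmult m n (opmult m n T Y) (adjoint T) p q * c q)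
      = (\<Sum>p\<in>?F. \<Sum>q\<in>?F. \<Sum>r\<in>?F. \<Sum>s\<in>?F. t p q r s)"
    unfolding t_def opmult_def adjoint_def
    by (intro sum.cong refl) (simp add: sum_distrib_left sum_distrib_right mult_ac)
  also have "\<dots> = (\<Sum>p\<in>?F. \<Sum>r\<in>?F. \<Sum>q\<in>?F. \<Sum>s\<in>?F. t p q r s)"
    by (rule sum.cong[OF refl], rule sum.swap)
  also have "\<dots> = (\<Sum>p\<in>?F. \<Sum>r\<in>?F. \<Sum>s\<in>?F. \<Sum>q\<in>?F. t p q r s)"
    by (rule sum.cong[OF refl], rule sum.cong[OF refl], rule sum.swap)
  also have "\<dots> = (\<Sum>p\<in>?F. \<Sum>s\<in>?F. \<Sum>r\<in>?F. \<Sum>q\<in>?F. t p q r s)"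
    by (rule sum.cong[OF refl], rule sum.swap)
  also have "\<dots> = (\<Sum>s\<in>?F. \<Sum>p\<in>?F. \<Sum>r\<in>?F. \<Sum>q\<in>?F. t p q r s)"
    by (rule sum.swap)
  also have "\<dots> = (\<Sum>s\<in>?F. \<Sum>r\<in>?F. \<Sum>p\<in>?F. \<Sum>q\<in>?F. t p q r s)"
    by (rule sum.cong[OF refl], rule sum.swap)
  also have "\<dots> = (\<Sum>s\<in>?F. \<Sum>r\<in>?F.
            (\<Sum>p\<in>?F. cnj (c p) * T p s) * Y s r * cnj (\<Sum>p\<in>?F. cnj (c p) * T p r))"
    unfolding t_def
    by (intro sum.cong refl) (simp add: cnj_sum sum_distrib_left sum_distrib_right mult_ac)
  finally show ?thesis .
qed

lemma sgn_sq: "sgn_pow z * sgn_pow z = 1"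
  by (simp add: sgn_pow_def)

lemma sgn_real: "sgn_pow z \<in> \<real>"
  by (simp add: sgn_pow_def)



theorem mainTheorem13:
  fixes m n k :: nat and n0 :: fock and \<alpha> :: "nat \<Rightarrow> complex"
    and g :: "nat \<Rightarrow> nat \<Rightarrow> complex" and e :: "gtp \<Rightarrow> fop"
  assumes "2 \<le> m" and "k \<le> n"
    and "n0 \<in> fock_states m n"
    and "g \<in> SU m"
    and "gt_basis m n k e"
    and "s_lam m n k \<noteq> 0"
  shows "filter_fn m n k n0 \<alpha> g =
     sgn_pow (gt_phi m (tau_diag n) (gt_of_fock m n0)) / s_lam m n k *
     (\<Sum>M\<in>gt_patterns m (lambda_k m k).
        CG m n e M (gt_of_fock m n0) (gt_of_fock m n0) *
        (\<Sum>N'\<in>gt_patterns m (tau_diag n).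
           sgn_pow (gt_phi m (tau_diag n) N') * CG m n e M N' N' *
           complex_of_real ((cmod (coh_tau_amp m n \<alpha> g (fock_of_gt m N')))\<^sup>2)))"
proof -
  let ?F = "fock_states m n"
  let ?G = "gt_patterns m (lambda_k m k)"
  let ?A = "coh_tau_amp m n \<alpha> g"
  let ?T = "tau_mat m n g"
  let ?N0 = "gt_of_fock m n0"
  let ?sg = "sgn_pow (gt_phi m (tau_diag n) ?N0)"
  let ?s = "s_lam m n k"
  have gb: "gt_basis m n k e" by fact
  have n0F: "n0 \<in> ?F" by fact
  have m1: "1 \<le> m" using assms(1) by simp
  define Q where "Q M = (\<Sum>v\<in>?F. e M v v * complex_of_real ((cmod (?A v))\<^sup>2))" for M
  have hs: "hs_inner m n (e M) (fock_proj n0) = cnj (e M n0 n0)" for M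
  proof -
    have pw: "cnj (e M p q) * fock_proj n0 p q = (if q = n0 then (if p = n0 then cnj (e M n0 n0) else 0) else 0)" for p q
      by (simp add: fock_proj_def)
    have "hs_inner m n (e M) (fock_proj n0)
        = (\<Sum>p\<in>?F. \<Sum>q\<in>?F. if q = n0 then (if p = n0 then cnj (e M n0 n0) else 0) else 0)"
      unfolding hs_inner_def pw ..
    also have "\<dots> = cnj (e M n0 n0)" using n0F by (simp add: finite_fock_states)
    finally show ?thesis .
  qed
  have Y: "P_lam m n k (fock_proj n0) = (\<lambda>s r. \<Sum>M\<in>?G. cnj (e M n0 n0) * e M s r)"
    using proj_expand[OF gb, of "fock_proj n0"] hs by simp
  have L1: "filter_fn m n k n0 \<alpha> g = (1 / ?s) *
      (\<Sum>s\<in>?F. \<Sum>r\<in>?F. ?A s * P_lam m n k (fock_proj n0) s r * cnj (?A r))"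
    unfolding filter_fn_def coh_expval_def coh_tau_amp_def
    using sandwich[of "coh m \<alpha>" m n ?T "P_lam m n k (fock_proj n0)"] by simp
  have L2: "(\<Sum>s\<in>?F. \<Sum>r\<in>?F. ?A s * (\<Sum>M\<in>?G. cnj (e M n0 n0) * e M s r) * cnj (?A r))
      = (\<Sum>M\<in>?G. cnj (e M n0 n0) * Q M)"
  proof -
    have "(\<Sum>s\<in>?F. \<Sum>r\<in>?F. ?A s * (\<Sum>M\<in>?G. cnj (e M n0 n0) * e M s r) * cnj (?A r))
        = (\<Sum>s\<in>?F. \<Sum>r\<in>?F. \<Sum>M\<in>?G. cnj (e M n0 n0) * (?A s * e M s r * cnj (?A r)))"
      by (intro sum.cong refl) (simp add: sum_distrib_left sum_distrib_right mult_ac)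
    also have "\<dots> = (\<Sum>s\<in>?F. \<Sum>M\<in>?G. \<Sum>r\<in>?F. cnj (e M n0 n0) * (?A s * e M s r * cnj (?A r)))"
      by (rule sum.cong[OF refl], rule sum.swap)
    also have "\<dots> = (\<Sum>M\<in>?G. \<Sum>s\<in>?F. \<Sum>r\<in>?F. cnj (e M n0 n0) * (?A s * e M s r * cnj (?A r)))"
      by (rule sum.swap)
    also have "\<dots> = (\<Sum>M\<in>?G. cnj (e M n0 n0) * Q M)"
    proof (rule sum.cong[OF refl])
      fix M assume M: "M \<in> ?G"
      show "(\<Sum>s\<in>?F. \<Sum>r\<in>?F. cnj (e M n0 n0) * (?A s * e M s r * cnj (?A r))) = cnj (e M n0 n0) * Q M"
      proof (cases "e M n0 n0 = 0")
        case True then show ?thesis by simp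
      next
        case False
        have "(\<Sum>r\<in>?F. cnj (e M n0 n0) * (?A s * e M s r * cnj (?A r)))
            = cnj (e M n0 n0) * (e M s s * complex_of_real ((cmod (?A s))\<^sup>2))" if s: "s \<in> ?F" for s
        proof -
          have "(\<Sum>r\<in>?F. cnj (e M n0 n0) * (?A s * e M s r * cnj (?A r)))
              = (\<Sum>r\<in>?F. if s = r then cnj (e M n0 n0) * (?A s * e M s s * cnj (?A s)) else 0)"
          proof (rule sum.cong[OF refl])
            fix r assume "r \<in> ?F"
            show "cnj (e M n0 n0) * (?A s * e M s r * cnj (?A r))
                = (if s = r then cnj (e M n0 n0) * (?A s * e M s s * cnj (?A s)) else 0)"
            proof (cases "e M s r = 0")
              case True
              then show ?thesis by auto
            next
              case False2: False
              then have "s = r" using basis_diag[where e=e and M=M and v=n0 and p=s and q=r, OF gb M False False2] by simp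
              then show ?thesis by simp
            qed
          qed
          also have "\<dots> = cnj (e M n0 n0) * (?A s * e M s s * cnj (?A s))"
            using s by (simp add: finite_fock_states)
          also have "\<dots> = cnj (e M n0 n0) * (e M s s * complex_of_real ((cmod (?A s))\<^sup>2))"
            unfolding complex_norm_square by (simp add: mult_ac)
          finally show ?thesis .
        qed
        then have "(\<Sum>s\<in>?F. \<Sum>r\<in>?F. cnj (e M n0 n0) * (?A s * e M s r * cnj (?A r)))
            = (\<Sum>s\<in>?F. cnj (e M n0 n0) * (e M s s * complex_of_real ((cmod (?A s))\<^sup>2)))"
          by (rule sum.cong[OF refl])
        also have "\<dots> = cnj (e M n0 n0) * Q M" unfolding Q_def by (simp add: sum_distrib_left)
        finally show ?thesis .
      qed
    qed
    finally show ?thesis .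
  qed
  have N0G: "?N0 \<in> gt_patterns m (tau_diag n)" using gt_of_fock_in[OF n0F] .
  have fN0: "fock_of_gt m ?N0 = n0" using fock_gt_fock[OF n0F] .
  have CG0: "CG m n e M ?N0 ?N0 = ?sg * e M n0 n0" for M
    unfolding CG_def fN0 ..
  have realM: "cnj (e M n0 n0) = e M n0 n0" if M: "M \<in> ?G" for M
  proof -
    have "CG m n e M ?N0 ?N0 \<in> \<real>" using gb_real[OF gb M N0G N0G] .
    then have "?sg * (?sg * e M n0 n0) \<in> \<real>" using CG0[of M] sgn_real by (metis Reals_mult)
    then have "e M n0 n0 \<in> \<real>" by (simp add: mult.assoc[symmetric] sgn_sq)
    then show ?thesis by (simp add: Reals_cnj_iff)
  qed
  have R: "(\<Sum>N'\<in>gt_patterns m (tau_diag n).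
           sgn_pow (gt_phi m (tau_diag n) N') * CG m n e M N' N' *
           complex_of_real ((cmod (?A (fock_of_gt m N')))\<^sup>2)) = Q M" for M
  proof -
    have "(\<Sum>N'\<in>gt_patterns m (tau_diag n).
           sgn_pow (gt_phi m (tau_diag n) N') * CG m n e M N' N' *
           complex_of_real ((cmod (?A (fock_of_gt m N')))\<^sup>2))
        = (\<Sum>N'\<in>gt_patterns m (tau_diag n). (\<lambda>v. e M v v * complex_of_real ((cmod (?A v))\<^sup>2)) (fock_of_gt m N'))"
      unfolding CG_def by (intro sum.cong refl) (simp add: mult.assoc[symmetric] sgn_sq)
    also have "\<dots> = Q M" unfolding Q_def by (rule sum_gt_fock[OF m1])
    finally show ?thesis .
  qed
  have "filter_fn m n k n0 \<alpha> g = (1 / ?s) * (\<Sum>M\<in>?G. e M n0 n0 * Q M)"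
    using L1 L2 Y realM by simp
  also have "\<dots> = ?sg / ?s * (\<Sum>M\<in>?G. CG m n e M ?N0 ?N0 * Q M)"
  proof -
    have "(\<Sum>M\<in>?G. e M n0 n0 * Q M) = ?sg * (\<Sum>M\<in>?G. CG m n e M ?N0 ?N0 * Q M)"
      unfolding CG0 sum_distrib_left by (intro sum.cong refl) (simp add: mult.assoc[symmetric] sgn_sq)
    then show ?thesis by simp
  qed
  also have "\<dots> = ?sg / ?s * (\<Sum>M\<in>?G. CG m n e M ?N0 ?N0 *
        (\<Sum>N'\<in>gt_patterns m (tau_diag n).
           sgn_pow (gt_phi m (tau_diag n) N') * CG m n e M N' N' *
           complex_of_real ((cmod (?A (fock_of_gt m N')))\<^sup>2)))"
    unfolding R ..
  finally show ?thesis .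
qed

end
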